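(* Let $S$ be a memory system satisfying the Causality assumption, let $n,m,v\ge1$, let $\Omega$ be a witness for $S(n,m,v)$, and let $\tau$ be an unambiguous trace of $S(n,m,v)$. If the graph $G(\Omega)(\tau)$ has a (directed) cycle, then it has a $k$-nice cycle for some $k$ with $1\le k\le\min\{n,m\}$.
   Context: Notation: $\mathbb{N}_n=\{1,\dots,n\}$, $\mathbb{W}_n=\{0,\dots,n\}$. Memory events $E(n,m,v)=\{R,W\}\times\mathbb{N}_n\times\mathbb{N}_m\times\mathbb{W}_v$; for $e=\langle a,b,c,d\rangle$, $op(e)=a$, $proc(e)=b$, $loc(e)=c$, $data(e)=d$; $0$ models the initial value of every location. A memory system is a family $S=(S(n,m,v))_{n,m,v\ge1}$, $S(n,m,v)$ a regular set of finite runs over an alphabet $E^a(n,m,v)\supseteq E(n,m,v)$ (other letters are internal events). The trace of a run is its subsequence of memory events; traces of $S(n,m,v)$ are traces of its runs. For a sequence $\tau$ of memory events with positions $1,\dots,|\tau|$: $P(\tau,i)=\{k: proc(\tau(k))=i\}$, $L(\tau,j)=\{k: loc(\tau(k))=j\}$, $L^w(\tau,j)=\{k\in L(\tau,j): op(\tau(k))=W\}$, $L^r(\tau,j)=\{k\in L(\tau,j): op(\tau(k))=R\}$. A trace $\tau$ is unambiguous if for every location $j$ and $x\in L^w(\tau,j)$, $data(\tau(x))\ne0$ and $data(\tau(x))\ne data(\tau(y))$ for all $y\in L^w(\tau,j)\setminus\{x\}$. Causality assumption: for all $n,m,v\ge1$, every trace $\tau$ of $S(n,m,v)$, every location $j$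 and every $x\in L^r(\tau,j)$, either $data(\tau(x))=0$ or there is $y\in L^w(\tau,j)$ with $data(\tau(x))=data(\tau(y))$. $M(\tau,i)=\{\langle u,v\rangle: u,v\in P(\tau,i), u<v\}$. A witness $\Omega$ for $S(n,m,v)$ assigns to every trace $\tau$ of $S(n,m,v)$ and location $j$ a strict total order $\Omega(\tau,j)$ on $L^w(\tau,j)$. For unambiguous $\tau$, $\Omega^e(\tau,j)\subseteq L(\tau,j)^2$: $\langle x,y\rangle\in\Omega^e(\tau,j)$ iff (1) $data(\tau(x))=data(\tau(y))$, $op(\tau(x))=W$, $op(\tau(y))=R$; or (2) $data(\tau(x))=0$ and $data(\tau(y))\ne0$; or (3) there are $a,b\in L^w(\tau,j)$ with $\langle a,b\rangle\in\Omega(\tau,j)$, $data(\tau(a))=data(\tau(x))$, $data(\tau(b))=data(\tau(y))$. $G(\Omega)(\tau)$ is the directed graph on $\{1,\dots,|\tau|\}$ with edge set $\bigcup_{1\le i\le n}M(\tau,i)\cup\bigcup_{1\le j\le m}\Omega^e(\tau,j)$. For $k\ge1$ let $\oplus$ denote addition in the cyclic group on $\mathbb{N}_k$ with identity $k$ (so $x\oplus1=x+1$ for $x<k$ and $k\oplus1=1$). A $k$-nice cycle in $G(\Omega)(\tau)$ is a sequence $u_1,v_1,\dots,u_k,v_k$ of pairwise distinct vertices such that: (i) for every $1\le x\le k$, $\langle u_x,v_x\rangle\in M(\tau,i)$ for some processor $i$ and $\langle v_x,u_{x\oplus1}\rangle\in\Omega^e(\tau,j)$ for some location $j$; (ii)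 for $1\le x<y\le k$, if $\langle u_x,v_x\rangle\in M(\tau,i)$ and $\langle u_y,v_y\rangle\in M(\tau,i')$ then $i\ne i'$; (iii) for $1\le x<y\le k$, if $\langle v_x,u_{x\oplus1}\rangle\in\Omega^e(\tau,j)$ and $\langle v_y,u_{y\oplus1}\rangle\in\Omega^e(\tau,j')$ then $j\ne j'$. *)

theory Defs
  imports Main
begin

datatype opr = R | W

type_synonym event = "opr \<times> nat \<times> nat \<times> nat"

definition ev_op :: "event \<Rightarrow> opr" where "ev_op e = fst e"
definition ev_proc :: "event \<Rightarrow> nat" where "ev_proc e = fst (snd e)"
definition ev_loc :: "event \<Rightarrow> nat" where "ev_loc e = fst (snd (snd e))"
definition ev_data :: "event \<Rightarrow> nat" where "ev_data e = snd (snd (snd e))"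

definition E :: "nat \<Rightarrow> nat \<Rightarrow> nat \<Rightarrow> event set" where
  "E n m v = UNIV \<times> {1..n} \<times> {1..m} \<times> {0..v}"

datatype 'i letter = MemE event | Internal 'i

definition regular_on :: "'a set \<Rightarrow> 'a list set \<Rightarrow> bool" where
  "regular_on A L \<longleftrightarrow>
     (\<exists>(Q::nat set) q0 (\<delta>::nat \<Rightarrow> 'a \<Rightarrow> nat) F.
        finite Q \<and> q0 \<in> Q \<and> F \<subseteq> Q \<and> (\<forall>q\<in>Q. \<forall>a\<in>A. \<delta> q a \<in> Q) \<and>
        L = {w. set w \<subseteq> A \<and> foldl \<delta> q0 w \<in> F})"

definition memory_system ::
  "(nat \<Rightarrow> nat \<Rightarrow> nat \<Rightarrow> 'i letter set) \<Rightarrow> (nat \<Rightarrow> nat \<Rightarrow> nat \<Rightarrow> 'i letter list set) \<Rightarrow> bool" where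
  "memory_system Ea S \<longleftrightarrow>
     (\<forall>n m v. n \<ge> 1 \<longrightarrow> m \<ge> 1 \<longrightarrow> v \<ge> 1 \<longrightarrow>
        finite (Ea n m v) \<and> (\<forall>e. MemE e \<in> Ea n m v \<longleftrightarrow> e \<in> E n m v) \<and>
        regular_on (Ea n m v) (S n m v))"

fun mem_part :: "'i letter \<Rightarrow> event list" where
  "mem_part (MemE e) = [e]"
| "mem_part (Internal _) = []"

definition trace :: "'i letter list \<Rightarrow> event list" where
  "trace r = concat (map mem_part r)"

definition traces :: "(nat \<Rightarrow> nat \<Rightarrow> nat \<Rightarrow> 'i letter list set) \<Rightarrow> nat \<Rightarrow> nat \<Rightarrow> nat \<Rightarrow> event list set" where
  "traces S n m v = trace ` S n m v"

section \<open>Positions (1-based)\<close>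

definition at :: "event list \<Rightarrow> nat \<Rightarrow> event" where
  "at \<tau> k = \<tau> ! (k - 1)"

definition pos :: "event list \<Rightarrow> nat set" where
  "pos \<tau> = {1..length \<tau>}"

definition P :: "event list \<Rightarrow> nat \<Rightarrow> nat set" where
  "P \<tau> i = {k \<in> pos \<tau>. ev_proc (at \<tau> k) = i}"

definition L :: "event list \<Rightarrow> nat \<Rightarrow> nat set" where
  "L \<tau> j = {k \<in> pos \<tau>. ev_loc (at \<tau> k) = j}"

definition Lw :: "event list \<Rightarrow> nat \<Rightarrow> nat set" where
  "Lw \<tau> j = {k \<in> L \<tau> j. ev_op (at \<tau> k) = W}"

definition Lr :: "event list \<Rightarrow> nat \<Rightarrow> nat set" where
  "Lr \<tau> j = {k \<in> L \<tau> j. ev_op (at \<tau> k) = R}"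

definition unambiguous :: "event list \<Rightarrow> bool" where
  "unambiguous \<tau> \<longleftrightarrow>
     (\<forall>j. \<forall>x\<in>Lw \<tau> j. ev_data (at \<tau> x) \<noteq> 0 \<and>
        (\<forall>y\<in>Lw \<tau> j - {x}. ev_data (at \<tau> x) \<noteq> ev_data (at \<tau> y)))"

definition causality :: "(nat \<Rightarrow> nat \<Rightarrow> nat \<Rightarrow> 'i letter list set) \<Rightarrow> bool" where
  "causality S \<longleftrightarrow>
     (\<forall>n m v. n \<ge> 1 \<longrightarrow> m \<ge> 1 \<longrightarrow> v \<ge> 1 \<longrightarrow>
       (\<forall>\<tau>\<in>traces S n m v. \<forall>j. \<forall>x\<in>Lr \<tau> j.
          ev_data (at \<tau> x) = 0 \<or> (\<exists>y\<in>Lw \<tau> j. ev_data (at \<tau> x) = ev_data (at \<tau> y))))"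

definition M :: "event list \<Rightarrow> nat \<Rightarrow> (nat \<times> nat) set" where
  "M \<tau> i = {(u, w). u \<in> P \<tau> i \<and> w \<in> P \<tau> i \<and> u < w}"

definition strict_total_order_on :: "'a set \<Rightarrow> ('a \<times> 'a) set \<Rightarrow> bool" where
  "strict_total_order_on A r \<longleftrightarrow> r \<subseteq> A \<times> A \<and> strict_linear_order_on A r"

definition witness ::
  "(nat \<Rightarrow> nat \<Rightarrow> nat \<Rightarrow> 'i letter list set) \<Rightarrow> nat \<Rightarrow> nat \<Rightarrow> nat
     \<Rightarrow> (event list \<Rightarrow> nat \<Rightarrow> (nat \<times> nat) set) \<Rightarrow> bool" where
  "witness S n m v \<Omega> \<longleftrightarrow>
     (\<forall>\<tau>\<in>traces S n m v. \<forall>j\<in>{1..m}. strict_total_order_on (Lw \<tau> j) (\<Omega> \<tau> j))"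

definition Omega_e :: "(event list \<Rightarrow> nat \<Rightarrow> (nat \<times> nat) set) \<Rightarrow> event list \<Rightarrow> nat \<Rightarrow> (nat \<times> nat) set" where
  "Omega_e \<Omega> \<tau> j = {(x, y). x \<in> L \<tau> j \<and> y \<in> L \<tau> j \<and>
      ((ev_data (at \<tau> x) = ev_data (at \<tau> y) \<and> ev_op (at \<tau> x) = W \<and> ev_op (at \<tau> y) = R)
     \<or> (ev_data (at \<tau> x) = 0 \<and> ev_data (at \<tau> y) \<noteq> 0)
     \<or> (\<exists>a\<in>Lw \<tau> j. \<exists>b\<in>Lw \<tau> j. (a, b) \<in> \<Omega> \<tau> j \<and>
          ev_data (at \<tau> a) = ev_data (at \<tau> x) \<and> ev_data (at \<tau> b) = ev_data (at \<tau> y)))}"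

text \<open>Edge set of G(Omega)(tau); its vertex set is pos tau, which contains all endpoints.\<close>
definition G_edges :: "(event list \<Rightarrow> nat \<Rightarrow> (nat \<times> nat) set) \<Rightarrow> event list \<Rightarrow> nat \<Rightarrow> nat \<Rightarrow> (nat \<times> nat) set" where
  "G_edges \<Omega> \<tau> n m = (\<Union>i\<in>{1..n}. M \<tau> i) \<union> (\<Union>j\<in>{1..m}. Omega_e \<Omega> \<tau> j)"

text \<open>x \<oplus> 1 in the cyclic group on N_k with identity k.\<close>
definition cyc_succ :: "nat \<Rightarrow> nat \<Rightarrow> nat" where
  "cyc_succ k x = (if x < k then x + 1 else 1)"

text \<open>u, v encode the sequence u_1, v_1, ..., u_k, v_k.\<close>
definition nice_cycle ::
  "(event list \<Rightarrow> nat \<Rightarrow> (nat \<times> nat) set) \<Rightarrow> event list \<Rightarrow> nat \<Rightarrow> nat \<Rightarrow> nat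
     \<Rightarrow> (nat \<Rightarrow> nat) \<Rightarrow> (nat \<Rightarrow> nat) \<Rightarrow> bool" where
  "nice_cycle \<Omega> \<tau> n m k u v \<longleftrightarrow>
     inj_on u {1..k} \<and> inj_on v {1..k} \<and> u ` {1..k} \<inter> v ` {1..k} = {} \<and>
     u ` {1..k} \<subseteq> pos \<tau> \<and> v ` {1..k} \<subseteq> pos \<tau> \<and>
     (\<forall>x\<in>{1..k}. (\<exists>i\<in>{1..n}. (u x, v x) \<in> M \<tau> i) \<and>
                  (\<exists>j\<in>{1..m}. (v x, u (cyc_succ k x)) \<in> Omega_e \<Omega> \<tau> j)) \<and>
     (\<forall>x y i i'. 1 \<le> x \<longrightarrow> x < y \<longrightarrow> y \<le> k \<longrightarrow>
        (u x, v x) \<in> M \<tau> i \<longrightarrow> (u y, v y) \<in> M \<tau> i' \<longrightarrow> i \<noteq> i') \<and>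
     (\<forall>x y j j'. 1 \<le> x \<longrightarrow> x < y \<longrightarrow> y \<le> k \<longrightarrow>
        (v x, u (cyc_succ k x)) \<in> Omega_e \<Omega> \<tau> j \<longrightarrow>
        (v y, u (cyc_succ k y)) \<in> Omega_e \<Omega> \<tau> j' \<longrightarrow> j \<noteq> j')"

end

theory Submission
  imports Defs
begin

definition valid :: "(nat \<times> nat) set \<Rightarrow> (nat \<times> nat) set \<Rightarrow> nat \<Rightarrow> (nat \<Rightarrow> nat) \<Rightarrow> (nat \<Rightarrow> nat) \<Rightarrow> bool" where
  "valid A B k u v \<longleftrightarrow> 1 \<le> k \<and> (\<forall>t. (u t, v t) \<in> A \<and> (v t, u (Suc t)) \<in> B) \<and>
     (\<forall>t. u (t + k) = u t \<and> v (t + k) = v t)"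

lemma short1:
  assumes V: "valid A B k u v" and ab: "a \<le> b" "b < a + k" and e: "(u a, v b) \<in> A"
  shows "\<exists>u' v'. valid A B (k - (b - a)) u' v'"
proof -
  define k' where "k' = k - (b - a)"
  have k': "k' \<ge> 1" "b + 1 + (k' - 1) = a + k" using ab unfolding k'_def by auto
  define u' where "u' t = u (b + 1 + t mod k')" for t
  define v' where "v' t = (if t mod k' = k' - 1 then v b else v (b + 1 + t mod k'))" for t
  have per: "u (a + k) = u a" using V unfolding valid_def by (metis add.commute)
  have per': "\<forall>t. u' (t + k') = u' t \<and> v' (t + k') = v' t" unfolding u'_def v'_def by simp
  have "\<forall>t. (u' t, v' t) \<in> A \<and> (v' t, u' (Suc t)) \<in> B"
  proof
    fix t
    have s: "t mod k' < k'" using k' by simp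
    show "(u' t, v' t) \<in> A \<and> (v' t, u' (Suc t)) \<in> B"
    proof (cases "t mod k' = k' - 1")
      case True
      then have "Suc t mod k' = 0" using k' by (simp add: mod_Suc)
      moreover have "u' t = u a" using True k'(2) per unfolding u'_def by simp
      ultimately show ?thesis using True e V unfolding u'_def v'_def valid_def by auto
    next
      case False
      then have "Suc t mod k' = Suc (t mod k')" using s by (simp add: mod_Suc)
      then show ?thesis using False V unfolding u'_def v'_def valid_def by auto
    qed
  qed
  then have "valid A B k' u' v'" using per' k' unfolding valid_def by blast
  then show ?thesis unfolding k'_def by blast
qed

lemma short2:
  assumes V: "valid A B k u v" and ab: "a < b" "b \<le> a + k" and e: "(v a, u b) \<in> B"
  shows "\<exists>u' v'. valid A B (k + a + 1 - b) u' v'"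
proof -
  define k' where "k' = k + a + 1 - b"
  have k': "k' \<ge> 1" "b + (k' - 1) = a + k" using ab unfolding k'_def by auto
  define u' where "u' t = u (b + t mod k')" for t
  define v' where "v' t = (if t mod k' = k' - 1 then v a else v (b + t mod k'))" for t
  have per: "u (a + k) = u a" using V unfolding valid_def by (metis add.commute)
  have per': "\<forall>t. u' (t + k') = u' t \<and> v' (t + k') = v' t" unfolding u'_def v'_def by simp
  have "\<forall>t. (u' t, v' t) \<in> A \<and> (v' t, u' (Suc t)) \<in> B"
  proof
    fix t
    have s: "t mod k' < k'" using k' by simp
    show "(u' t, v' t) \<in> A \<and> (v' t, u' (Suc t)) \<in> B"
    proof (cases "t mod k' = k' - 1")
      case True
      then have "Suc t mod k' = 0" using k' by (simp add: mod_Suc)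
      moreover have "u' t = u a" using True k'(2) per unfolding u'_def by simp
      ultimately show ?thesis using True e V unfolding u'_def v'_def valid_def by auto
    next
      case False
      then have "Suc t mod k' = Suc (t mod k')" using s by (simp add: mod_Suc)
      then show ?thesis using False V unfolding u'_def v'_def valid_def by auto
    qed
  qed
  then have "valid A B k' u' v'" using per' k' unfolding valid_def by blast
  then show ?thesis unfolding k'_def by blast
qed

lemma cyc_to_valid:
  assumes "(y, y) \<in> (A O B)\<^sup>+"
  shows "\<exists>k u v. valid A B k u v"
proof -
  obtain k where k: "k > 0" "(y, y) \<in> (A O B) ^^ k" using assms trancl_power by blast
  then obtain f where f: "f 0 = y" "f k = y" "\<forall>i<k. (f i, f (Suc i)) \<in> A O B"
    using relpow_fun_conv by metis
  define u where "u t = f (t mod k)" for t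
  have us: "u (Suc t) = f (Suc (t mod k))" for t
  proof (cases "Suc (t mod k) = k")
    case True then show ?thesis using f unfolding u_def by (simp add: mod_Suc)
  next
    case False then show ?thesis unfolding u_def by (simp add: mod_Suc)
  qed
  have uC: "(u t, u (Suc t)) \<in> A O B" for t
    using f(3) us[of t] k(1) unfolding u_def by simp
  define v where "v t = (SOME w. (u t, w) \<in> A \<and> (w, u (Suc t)) \<in> B)" for t
  have vt: "(u t, v t) \<in> A \<and> (v t, u (Suc t)) \<in> B" for t
    unfolding v_def by (rule someI_ex) (use uC[of t] in blast)
  have up: "u (t + k) = u t" for t unfolding u_def by simp
  have vp: "v (t + k) = v t" for t
    unfolding v_def using up[of t] up[of "Suc t"] by simp
  have "valid A B k u v" unfolding valid_def using vt up vp k(1) by auto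
  then show ?thesis by blast
qed

lemma H1:
  assumes "(a, b) \<in> (A O B)\<^sup>+" "(b, z) \<in> B" "trans B"
  shows "(a, z) \<in> (A O B)\<^sup>+"
  using assms(1)
proof (cases rule: tranclE)
  case base
  then show ?thesis using assms(2,3) by (meson relcomp.simps r_into_trancl transD)
next
  case (step c)
  then have "(c, z) \<in> A O B" using assms(2,3) by (meson relcomp.simps transD)
  then show ?thesis using step by (meson trancl_into_trancl)
qed

lemma H2:
  assumes "(b, a) \<in> A" "(a, c) \<in> (A O B)\<^sup>+" "trans A"
  shows "(b, c) \<in> (A O B)\<^sup>+"
proof -
  have "(a, c) \<in> A O B \<or> (\<exists>d. (a, d) \<in> A O B \<and> (d, c) \<in> (A O B)\<^sup>+)"
    using assms(2) by (meson converse_tranclE)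
  then consider "(a, c) \<in> A O B" | d where "(a, d) \<in> A O B" "(d, c) \<in> (A O B)\<^sup>+" by blast
  then show ?thesis
  proof cases
  case 1
  then show ?thesis using assms(1,3) by (meson relcomp.simps r_into_trancl transD)
next
  case (2 d)
  note step = 2
  then have "(b, d) \<in> A O B" using assms(1,3) by (meson relcomp.simps transD)
  then show ?thesis using step by (meson trancl_into_trancl2)
qed
qed

lemma path_decomp:
  assumes tA: "trans A" and tB: "trans B" and p: "(x, y) \<in> (A \<union> B)\<^sup>+"
  shows "(x, y) \<in> A \<or> (x, y) \<in> B \<or> (x, y) \<in> B O A \<or>
    (\<exists>a b. (x = a \<or> (x, a) \<in> B) \<and> (a, b) \<in> (A O B)\<^sup>+ \<and> (b = y \<or> (b, y) \<in> A))"
  using p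
proof (induction rule: trancl_induct)
  case (base y)
  then show ?case by blast
next
  case (step y z)
  from step.IH consider "(x, y) \<in> A" | "(x, y) \<in> B" | "(x, y) \<in> B O A" |
    a b where "x = a \<or> (x, a) \<in> B" "(a, b) \<in> (A O B)\<^sup>+" "b = y \<or> (b, y) \<in> A" by blast
  then show ?case
  proof cases
    case 1 note xy = 1
    show ?thesis
    proof (cases "(y, z) \<in> A")
      case True then show ?thesis using xy tA by (meson transD)
    next
      case False
      then have "(x, z) \<in> A O B" using xy step.hyps(2) by blast
      then show ?thesis by blast
    qed
  next
    case 2
    then show ?thesis using step.hyps(2) tB by (auto dest: transD)
  next
    case 3
    then obtain w where w: "(x, w) \<in> B" "(w, y) \<in> A" by blast
    show ?thesis
    proof (cases "(y, z) \<in> A")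
      case True
      then have "(w, z) \<in> A" using w tA by (meson transD)
      then show ?thesis using w by blast
    next
      case False
      then have "(y, z) \<in> B" using step.hyps(2) by blast
      then have "(w, z) \<in> (A O B)\<^sup>+" using w by blast
      then show ?thesis using w by blast
    qed
  next
    case (4 a b) note h = 4
    show ?thesis
    proof (cases "(y, z) \<in> A")
      case True
      then have "b = z \<or> (b, z) \<in> A" using h(3) tA by (meson transD)
      then show ?thesis using h by blast
    next
      case False
      then have yz: "(y, z) \<in> B" using step.hyps(2) by blast
      have "(a, z) \<in> (A O B)\<^sup>+"
      proof (cases "b = y")
        case True then show ?thesis using H1[OF h(2) _ tB] yz by simp
      next
        case False
        then have "(b, z) \<in> A O B" using h(3) yz by blast
        then show ?thesis using h(2) by (meson trancl_into_trancl)
      qed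
      then show ?thesis using h(1) by blast
    qed
  qed
qed

lemma cycle_C:
  assumes tA: "trans A" and tB: "trans B" and iA: "\<And>x. (x, x) \<notin> A" and iB: "\<And>x. (x, x) \<notin> B"
    and p: "(x, x) \<in> (A \<union> B)\<^sup>+"
  shows "\<exists>y. (y, y) \<in> (A O B)\<^sup>+"
proof -
  from path_decomp[OF tA tB p] consider "(x, x) \<in> A" | "(x, x) \<in> B" | "(x, x) \<in> B O A" |
    a b where "x = a \<or> (x, a) \<in> B" "(a, b) \<in> (A O B)\<^sup>+" "b = x \<or> (b, x) \<in> A" by blast
  then show ?thesis
  proof cases
    case 1 then show ?thesis using iA by blast
  next
    case 2 then show ?thesis using iB by blast
  next
    case 3
    then obtain w where "(x, w) \<in> B" "(w, x) \<in> A" by blast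
    then have "(w, w) \<in> A O B" by blast
    then show ?thesis by blast
  next
    case (4 a b) note h = 4
    show ?thesis
    proof (cases "x = a")
      case True
      show ?thesis
      proof (cases "b = x")
        case True then show ?thesis using h(2) \<open>x = a\<close> by blast
      next
        case False
        then have "(b, b) \<in> (A O B)\<^sup>+" using H2[OF _ h(2) tA] h(3) True by simp
        then show ?thesis by blast
      qed
    next
      case False
      then have xa: "(x, a) \<in> B" using h(1) by blast
      show ?thesis
      proof (cases "b = x")
        case True then have "(a, a) \<in> (A O B)\<^sup>+" using H1[OF h(2) _ tB] xa by simp
        then show ?thesis by blast
      next
        case False
        then have "(b, a) \<in> A O B" using h(3) xa by blast
        then have "(a, a) \<in> (A O B)\<^sup>+" using h(2) by (meson trancl_into_trancl)
        then show ?thesis by blast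
      qed
    qed
  qed
qed

lemma min_nice:
  fixes Mi Oj :: "nat \<Rightarrow> (nat \<times> nat) set" and D Ed :: "nat \<Rightarrow> nat set"
  assumes Adef: "A = (\<Union>i\<in>I. Mi i)" and Bdef: "B = (\<Union>j\<in>J. Oj j)"
    and fin: "finite I" "finite J"
    and MD: "\<And>i a b. (a, b) \<in> Mi i \<Longrightarrow> a \<in> D i \<and> b \<in> D i"
    and Ddisj: "\<And>i i' x. x \<in> D i \<Longrightarrow> x \<in> D i' \<Longrightarrow> i = i'"
    and Mirr: "\<And>i x. (x, x) \<notin> Mi i"
    and M22: "\<And>i a b c d. (a, b) \<in> Mi i \<Longrightarrow> (c, d) \<in> Mi i \<Longrightarrow> (a, d) \<in> Mi i \<or> (c, b) \<in> Mi i"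
    and OE: "\<And>j a b. (a, b) \<in> Oj j \<Longrightarrow> a \<in> Ed j \<and> b \<in> Ed j"
    and Edisj: "\<And>j j' x. x \<in> Ed j \<Longrightarrow> x \<in> Ed j' \<Longrightarrow> j = j'"
    and O22: "\<And>j a b c d. j \<in> J \<Longrightarrow> (a, b) \<in> Oj j \<Longrightarrow> (c, d) \<in> Oj j \<Longrightarrow> (a, d) \<in> Oj j \<or> (c, b) \<in> Oj j"
    and V0: "valid A B k0 u0 v0"
  shows "\<exists>k u v. valid A B k u v \<and> k \<le> card I \<and> k \<le> card J \<and>
     inj_on u {1..k} \<and> inj_on v {1..k} \<and> u ` {1..k} \<inter> v ` {1..k} = {} \<and>
     (\<forall>x y i i'. 1 \<le> x \<longrightarrow> x < y \<longrightarrow> y \<le> k \<longrightarrow> (u x, v x) \<in> Mi i \<longrightarrow> (u y, v y) \<in> Mi i' \<longrightarrow> i \<noteq> i') \<and>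
     (\<forall>x y j j'. 1 \<le> x \<longrightarrow> x < y \<longrightarrow> y \<le> k \<longrightarrow> (v x, u (Suc x)) \<in> Oj j \<longrightarrow> (v y, u (Suc y)) \<in> Oj j' \<longrightarrow> j \<noteq> j')"
proof -
  define Q where "Q k \<longleftrightarrow> (\<exists>u v. valid A B k u v)" for k
  define k where "k = (LEAST k. Q k)"
  have Qk: "Q k" unfolding k_def by (rule LeastI[of Q k0]) (use V0 Q_def in blast)
  have kmin: "Q k' \<Longrightarrow> k \<le> k'" for k' unfolding k_def by (rule Least_le)
  obtain u v where V: "valid A B k u v" using Qk Q_def by blast
  have k1: "1 \<le> k" and eA: "\<And>t. (u t, v t) \<in> A" and eB: "\<And>t. (v t, u (Suc t)) \<in> B"
    and pu: "\<And>t. u (t + k) = u t" and pv: "\<And>t. v (t + k) = v t"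
    using V unfolding valid_def by auto
  have s1: "False" if "a \<le> b" "b < a + k" "(u a, v b) \<in> A" "b - a > 0" for a b
  proof -
    have "Q (k - (b - a))" using short1[OF V that(1-3)] Q_def by blast
    then show False using kmin[of "k - (b - a)"] that by linarith
  qed
  have s2: "False" if "a < b" "b \<le> a + k" "(v a, u b) \<in> B" "k + a + 1 - b < k" for a b
  proof -
    have "Q (k + a + 1 - b)" using short2[OF V that(1-3)] Q_def by blast
    then show False using kmin[of "k + a + 1 - b"] that by linarith
  qed
  have irrA: "(x, x) \<notin> A" for x using Mirr unfolding Adef by blast
  have transA: "(a, c) \<in> A" if ab: "(a, b) \<in> A" "(b, c) \<in> A" for a b c
  proof -
    obtain i i' where i: "i \<in> I" "(a, b) \<in> Mi i" "i' \<in> I" "(b, c) \<in> Mi i'" using ab Adef by blast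
    then have "i = i'" using MD Ddisj by blast
    then have "(a, c) \<in> Mi i" using M22[OF i(2), of b c] i Mirr by blast
    then show ?thesis using i Adef by blast
  qed
  have injU: "u x \<noteq> u y" if "1 \<le> x" "x < y" "y \<le> k" for x y
  proof
    assume h: "u x = u y"
    have "(v (y - 1), u (x + k)) \<in> B" using eB[of "y - 1"] h pu[of x] that by simp
    moreover have "y - 1 < x + k" "x + k \<le> y - 1 + k" "k + (y - 1) + 1 - (x + k) < k" using that by auto
    ultimately show False using s2[of "y - 1" "x + k"] by blast
  qed
  have injV: "v x \<noteq> v y" if "1 \<le> x" "x < y" "y \<le> k" for x y
  proof
    assume h: "v x = v y"
    have "(u x, v y) \<in> A" using eA[of x] h by simp
    then show False using s1[of x y] that by auto
  qed
  have disj: "u x \<noteq> v y" if "1 \<le> x" "x \<le> k" "1 \<le> y" "y \<le> k" for x y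
  proof
    assume h: "u x = v y"
    consider "x = y" | "y < x" | "x < y" by linarith
    then show False
    proof cases
      case 1 then show False using eA[of x] h irrA by simp
    next
      case 2
      have "(u y, u x) \<in> A" using eA[of y] h by simp
      then have "(u y, v x) \<in> A" using transA eA[of x] by blast
      then show False using s1[of y x] 2 that by auto
    next
      case 3
      have "(u y, u x) \<in> A" using eA[of y] h by simp
      then have "(u y, v (x + k)) \<in> A" using transA eA[of x] pv[of x] by simp
      then show False using s1[of y "x + k"] 3 that by auto
    qed
  qed
  have procs: "\<not> ((u x, v x) \<in> Mi i \<and> (u y, v y) \<in> Mi i)" if "1 \<le> x" "x < y" "y \<le> k" for x y i
  proof
    assume h: "(u x, v x) \<in> Mi i \<and> (u y, v y) \<in> Mi i"
    obtain i0 where i0: "i0 \<in> I" "(u x, v x) \<in> Mi i0" using eA[of x] Adef by blast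
    then have "i = i0" using h MD Ddisj by blast
    with i0 have iI: "i \<in> I" by simp
    from M22[of "u x" "v x" i "u y" "v y"] h
    consider "(u x, v y) \<in> Mi i" | "(u y, v x) \<in> Mi i" by blast
    then show False
    proof cases
      case 1
      then have "(u x, v y) \<in> A" using iI Adef by blast
      then show False using s1[of x y] that by auto
    next
      case 2
      then have "(u y, v (x + k)) \<in> A" using iI Adef pv[of x] by auto
      then show False using s1[of y "x + k"] that by auto
    qed
  qed
  have locs: "\<not> ((v x, u (Suc x)) \<in> Oj j \<and> (v y, u (Suc y)) \<in> Oj j)" if "1 \<le> x" "x < y" "y \<le> k" for x y j
  proof
    assume h: "(v x, u (Suc x)) \<in> Oj j \<and> (v y, u (Suc y)) \<in> Oj j"
    obtain j0 where j0: "j0 \<in> J" "(v x, u (Suc x)) \<in> Oj j0" using eB[of x] Bdef by blast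
    then have "j = j0" using h OE Edisj by blast
    with j0 have jJ: "j \<in> J" by simp
    from O22[OF jJ, of "v x" "u (Suc x)" "v y" "u (Suc y)"] h
    consider "(v x, u (Suc y)) \<in> Oj j" | "(v y, u (Suc x)) \<in> Oj j" by blast
    then show False
    proof cases
      case 1
      then have "(v x, u (Suc y)) \<in> B" using jJ Bdef by blast
      moreover have "x < Suc y" "Suc y \<le> x + k" "k + x + 1 - Suc y < k" using that by auto
      ultimately show False using s2[of x "Suc y"] by blast
    next
      case 2
      then have "(v y, u (Suc x + k)) \<in> B" using jJ Bdef pu[of "Suc x"] by auto
      moreover have "y < Suc x + k" "Suc x + k \<le> y + k" "k + y + 1 - (Suc x + k) < k" using that by auto
      ultimately show False using s2[of y "Suc x + k"] by blast
    qed
  qed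
  have inju: "inj_on u {1..k}"
  proof (rule inj_onI)
    fix x y assume "x \<in> {1..k}" "y \<in> {1..k}" "u x = u y"
    then show "x = y" using injU[of x y] injU[of y x] by (cases "x < y"; cases "y < x") auto
  qed
  have injv: "inj_on v {1..k}"
  proof (rule inj_onI)
    fix x y assume "x \<in> {1..k}" "y \<in> {1..k}" "v x = v y"
    then show "x = y" using injV[of x y] injV[of y x] by (cases "x < y"; cases "y < x") auto
  qed
  have dis: "u ` {1..k} \<inter> v ` {1..k} = {}"
  proof (rule equals0I)
    fix z assume "z \<in> u ` {1..k} \<inter> v ` {1..k}"
    then obtain x y where "x \<in> {1..k}" "y \<in> {1..k}" "z = u x" "z = v y" by blast
    then show False using disj[of x y] by simp
  qed
  define ix where "ix x = (SOME i. i \<in> I \<and> (u x, v x) \<in> Mi i)" for x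
  have ix: "ix x \<in> I \<and> (u x, v x) \<in> Mi (ix x)" for x
    unfolding ix_def by (rule someI_ex) (use eA[of x] Adef in blast)
  have "inj_on ix {1..k}"
  proof (rule inj_onI)
    fix x y assume h: "x \<in> {1..k}" "y \<in> {1..k}" "ix x = ix y"
    show "x = y"
    proof (rule ccontr)
      assume "x \<noteq> y"
      then consider "x < y" | "y < x" by linarith
      then show False
        using procs[of x y "ix x"] procs[of y x "ix x"] ix[of x] ix[of y] h by cases auto
    qed
  qed
  moreover have "ix ` {1..k} \<subseteq> I" using ix by blast
  ultimately have cI: "k \<le> card I"
    using card_inj_on_le[of ix "{1..k}" I] fin by simp
  define jx where "jx x = (SOME j. j \<in> J \<and> (v x, u (Suc x)) \<in> Oj j)" for x
  have jx: "jx x \<in> J \<and> (v x, u (Suc x)) \<in> Oj (jx x)" for x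
    unfolding jx_def by (rule someI_ex) (use eB[of x] Bdef in blast)
  have "inj_on jx {1..k}"
  proof (rule inj_onI)
    fix x y assume h: "x \<in> {1..k}" "y \<in> {1..k}" "jx x = jx y"
    show "x = y"
    proof (rule ccontr)
      assume "x \<noteq> y"
      then consider "x < y" | "y < x" by linarith
      then show False
        using locs[of x y "jx x"] locs[of y x "jx x"] jx[of x] jx[of y] h by cases auto
    qed
  qed
  moreover have "jx ` {1..k} \<subseteq> J" using jx by blast
  ultimately have cJ: "k \<le> card J"
    using card_inj_on_le[of jx "{1..k}" J] fin by simp
  have P4: "\<forall>x y i i'. 1 \<le> x \<longrightarrow> x < y \<longrightarrow> y \<le> k \<longrightarrow> (u x, v x) \<in> Mi i \<longrightarrow> (u y, v y) \<in> Mi i' \<longrightarrow> i \<noteq> i'"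
  proof (intro allI impI)
    fix x y i i' assume "1 \<le> x" "x < y" "y \<le> k" "(u x, v x) \<in> Mi i" "(u y, v y) \<in> Mi i'"
    then show "i \<noteq> i'" using procs[of x y i] by auto
  qed
  have P5: "\<forall>x y j j'. 1 \<le> x \<longrightarrow> x < y \<longrightarrow> y \<le> k \<longrightarrow> (v x, u (Suc x)) \<in> Oj j \<longrightarrow> (v y, u (Suc y)) \<in> Oj j' \<longrightarrow> j \<noteq> j'"
  proof (intro allI impI)
    fix x y j j' assume "1 \<le> x" "x < y" "y \<le> k" "(v x, u (Suc x)) \<in> Oj j" "(v y, u (Suc y)) \<in> Oj j'"
    then show "j \<noteq> j'" using locs[of x y j] by auto
  qed
  show ?thesis
    using V cI cJ inju injv dis P4 P5 by blast
qed

lemma key_exists: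
  fixes \<tau> :: "event list" and \<Omega> :: "event list \<Rightarrow> nat \<Rightarrow> (nat \<times> nat) set" and j :: nat
  assumes tot: "strict_total_order_on (Lw \<tau> j) (\<Omega> \<tau> j)"
    and unamb: "unambiguous \<tau>"
    and caus: "\<forall>x\<in>Lr \<tau> j. ev_data (at \<tau> x) = 0 \<or> (\<exists>y\<in>Lw \<tau> j. ev_data (at \<tau> x) = ev_data (at \<tau> y))"
  shows "\<exists>key :: nat \<Rightarrow> nat. \<forall>x y. (x, y) \<in> Omega_e \<Omega> \<tau> j \<longleftrightarrow> x \<in> L \<tau> j \<and> y \<in> L \<tau> j \<and> key x < key y"
proof -
  define Wr where "Wr = Lw \<tau> j"
  define Om where "Om = \<Omega> \<tau> j"
  define d where "d x = ev_data (at \<tau> x)" for x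
  define op where "op x = ev_op (at \<tau> x)" for x
  have OmW: "Om \<subseteq> Wr \<times> Wr" and trO: "trans Om" and irO: "\<And>a. (a, a) \<notin> Om"
    and totO: "\<And>a b. a \<in> Wr \<Longrightarrow> b \<in> Wr \<Longrightarrow> a \<noteq> b \<Longrightarrow> (a, b) \<in> Om \<or> (b, a) \<in> Om"
    using tot unfolding strict_total_order_on_def strict_linear_order_on_def Wr_def Om_def
      irrefl_on_def total_on_def by auto
  have finW: "finite Wr" unfolding Wr_def Lw_def L_def pos_def by simp
  define rank where "rank w = card {a \<in> Wr. (a, w) \<in> Om}" for w
  have rank_lt: "rank a < rank b" if "(a, b) \<in> Om" for a b
  proof -
    have "{a' \<in> Wr. (a', a) \<in> Om} \<subset> {a' \<in> Wr. (a', b) \<in> Om}"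
    proof
      show "{a' \<in> Wr. (a', a) \<in> Om} \<subseteq> {a' \<in> Wr. (a', b) \<in> Om}"
        using that trO by (auto dest: transD)
      have "a \<in> Wr" using that OmW by auto
      then show "{a' \<in> Wr. (a', a) \<in> Om} \<noteq> {a' \<in> Wr. (a', b) \<in> Om}"
        using that irO by blast
    qed
    then show ?thesis unfolding rank_def by (rule psubset_card_mono[rotated]) (use finW in simp)
  qed
  have rank_iff: "(a, b) \<in> Om \<longleftrightarrow> rank a < rank b" if "a \<in> Wr" "b \<in> Wr" for a b
    using rank_lt totO[OF that] by (metis less_asym less_irrefl)
  have rank_eq: "a = b" if "a \<in> Wr" "b \<in> Wr" "rank a = rank b" for a b
    using rank_lt totO[OF that(1,2)] that(3) by (metis less_irrefl)
  have Wnz: "d a \<noteq> 0" if "a \<in> Wr" for a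
    using unamb that unfolding unambiguous_def Wr_def d_def by blast
  have Wuniq: "a = b" if "a \<in> Wr" "b \<in> Wr" "d a = d b" for a b
    using unamb that unfolding unambiguous_def Wr_def d_def by blast
  define wr where "wr x = (THE w. w \<in> Wr \<and> d w = d x)" for x
  have wr_ex: "\<exists>w. w \<in> Wr \<and> d w = d x" if "x \<in> L \<tau> j" "d x \<noteq> 0" for x
  proof (cases "op x")
    case R
    then have "x \<in> Lr \<tau> j" using that unfolding Lr_def op_def by simp
    then show ?thesis using caus that unfolding Wr_def d_def by metis
  next
    case W
    then have "x \<in> Wr" using that unfolding Wr_def Lw_def op_def by simp
    then show ?thesis by blast
  qed
  have wr_eq: "wr x = a" if "a \<in> Wr" "d a = d x" for x a
    unfolding wr_def by (rule the_equality) (use that Wuniq in auto)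
  have wr_prop: "wr x \<in> Wr \<and> d (wr x) = d x" if "x \<in> L \<tau> j" "d x \<noteq> 0" for x
    using wr_ex[OF that] wr_eq by metis
  define rk where "rk x = (if d x = 0 then 0 else Suc (rank (wr x)))" for x
  define key where "key x = 2 * rk x + (if op x = R then 1 else 0)" for x
  have LW: "x \<in> Wr \<longleftrightarrow> x \<in> L \<tau> j \<and> op x = W" for x
    unfolding Wr_def Lw_def op_def by simp
  have main: "(x, y) \<in> Omega_e \<Omega> \<tau> j \<longleftrightarrow> key x < key y" if xy: "x \<in> L \<tau> j" "y \<in> L \<tau> j" for x y
  proof
    assume "(x, y) \<in> Omega_e \<Omega> \<tau> j"
    then consider (c1) "d x = d y" "op x = W" "op y = R" | (c2) "d x = 0" "d y \<noteq> 0"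
      | (c3) a b where "a \<in> Wr" "b \<in> Wr" "(a, b) \<in> Om" "d a = d x" "d b = d y"
      unfolding Omega_e_def d_def op_def Wr_def Om_def by auto
    then show "key x < key y"
    proof cases
      case c1
      then have "x \<in> Wr" using LW xy by simp
      then have "d x \<noteq> 0" using Wnz by simp
      then have "rk x = rk y" using c1 unfolding rk_def wr_def by simp
      then show ?thesis using c1 unfolding key_def by simp
    next
      case c2
      then show ?thesis unfolding key_def rk_def by simp
    next
      case c3
      have "d x \<noteq> 0" "d y \<noteq> 0" using c3 Wnz by metis+
      moreover have "wr x = a" "wr y = b" using c3 wr_eq by auto
      moreover have "rank a < rank b" using c3 rank_lt by simp
      ultimately show ?thesis unfolding key_def rk_def by simp
    qed
  next
    assume lt: "key x < key y"
    show "(x, y) \<in> Omega_e \<Omega> \<tau> j"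
    proof (cases "d x = 0")
      case True
      then have "op x \<noteq> W" using LW Wnz xy by blast
      then have "op x = R" by (cases "op x") auto
      then have "key x = 1" using True unfolding key_def rk_def by simp
      then have "d y \<noteq> 0" using lt unfolding key_def rk_def by (auto split: if_splits)
      then show ?thesis using True xy unfolding Omega_e_def d_def by simp
    next
      case False
      then have dy: "d y \<noteq> 0" using lt unfolding key_def rk_def by (auto split: if_splits)
      have wx: "wr x \<in> Wr" "d (wr x) = d x" using wr_prop xy(1) False by auto
      have wy: "wr y \<in> Wr" "d (wr y) = d y" using wr_prop xy(2) dy by auto
      have "rank (wr x) < rank (wr y) \<or> (rank (wr x) = rank (wr y) \<and> op x \<noteq> R \<and> op y = R)"
        using lt False dy unfolding key_def rk_def by (auto split: if_splits)
      then show ?thesis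
      proof
        assume "rank (wr x) < rank (wr y)"
        then have "(wr x, wr y) \<in> Om" using rank_iff wx wy by simp
        then have "\<exists>a\<in>Lw \<tau> j. \<exists>b\<in>Lw \<tau> j. (a, b) \<in> \<Omega> \<tau> j \<and> ev_data (at \<tau> a) = ev_data (at \<tau> x) \<and> ev_data (at \<tau> b) = ev_data (at \<tau> y)"
          using wx wy unfolding Wr_def Om_def d_def by blast
        then show ?thesis using xy unfolding Omega_e_def by simp
      next
        assume h: "rank (wr x) = rank (wr y) \<and> op x \<noteq> R \<and> op y = R"
        then have "wr x = wr y" using rank_eq wx wy by simp
        then have "d x = d y" using wx wy by simp
        moreover have "op x = W" using h by (cases "op x") auto
        ultimately show ?thesis using h xy unfolding Omega_e_def d_def op_def by simp
      qed
    qed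
  qed
  have inL: "(x, y) \<in> Omega_e \<Omega> \<tau> j \<Longrightarrow> x \<in> L \<tau> j \<and> y \<in> L \<tau> j" for x y
    unfolding Omega_e_def by simp
  have "\<forall>x y. (x, y) \<in> Omega_e \<Omega> \<tau> j \<longleftrightarrow> x \<in> L \<tau> j \<and> y \<in> L \<tau> j \<and> key x < key y"
    using main inL by blast
  then show ?thesis by blast
qed


lemma fam_props:
  fixes Mi :: "nat \<Rightarrow> (nat \<times> nat) set" and D :: "nat \<Rightarrow> nat set"
  assumes MD: "\<And>i a b. (a, b) \<in> Mi i \<Longrightarrow> a \<in> D i \<and> b \<in> D i"
    and Ddisj: "\<And>i i' x. x \<in> D i \<Longrightarrow> x \<in> D i' \<Longrightarrow> i = i'"
    and irr: "\<And>i x. i \<in> I \<Longrightarrow> (x, x) \<notin> Mi i"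
    and M22: "\<And>i a b c d. i \<in> I \<Longrightarrow> (a, b) \<in> Mi i \<Longrightarrow> (c, d) \<in> Mi i \<Longrightarrow> (a, d) \<in> Mi i \<or> (c, b) \<in> Mi i"
  shows "trans (\<Union>i\<in>I. Mi i)" "\<And>x. (x, x) \<notin> (\<Union>i\<in>I. Mi i)"
proof -
  show "trans (\<Union>i\<in>I. Mi i)"
  proof (rule transI)
    fix a b c assume ab: "(a, b) \<in> (\<Union>i\<in>I. Mi i)" "(b, c) \<in> (\<Union>i\<in>I. Mi i)"
    obtain i i' where i: "i \<in> I" "(a, b) \<in> Mi i" "i' \<in> I" "(b, c) \<in> Mi i'" using ab by blast
    then have "i = i'" using MD Ddisj by blast
    then have "(a, c) \<in> Mi i" using M22[OF i(1) i(2), of b c] i irr by blast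
    then show "(a, c) \<in> (\<Union>i\<in>I. Mi i)" using i by blast
  qed
  show "\<And>x. (x, x) \<notin> (\<Union>i\<in>I. Mi i)" using irr by blast
qed

theorem theorem6p1:
  fixes Ea :: "nat \<Rightarrow> nat \<Rightarrow> nat \<Rightarrow> 'i letter set"
    and S :: "nat \<Rightarrow> nat \<Rightarrow> nat \<Rightarrow> 'i letter list set"
    and \<Omega> :: "event list \<Rightarrow> nat \<Rightarrow> (nat \<times> nat) set"
    and n m v :: nat and \<tau> :: "event list"
  assumes "memory_system Ea S"
    and "causality S"
    and "n \<ge> 1" and "m \<ge> 1" and "v \<ge> 1"
    and "witness S n m v \<Omega>"
    and "\<tau> \<in> traces S n m v"
    and "unambiguous \<tau>"
    and "\<not> acyclic (G_edges \<Omega> \<tau> n m)"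
  shows "\<exists>k u w. 1 \<le> k \<and> k \<le> min n m \<and> nice_cycle \<Omega> \<tau> n m k u w"
proof -
  define RM where "RM = (\<Union>i\<in>{1..n}. M \<tau> i)"
  define RO where "RO = (\<Union>j\<in>{1..m}. Omega_e \<Omega> \<tau> j)"
  have G: "G_edges \<Omega> \<tau> n m = RM \<union> RO" unfolding G_edges_def RM_def RO_def by simp
  have MD: "\<And>i a b. (a, b) \<in> M \<tau> i \<Longrightarrow> a \<in> P \<tau> i \<and> b \<in> P \<tau> i" unfolding M_def by simp
  have Ddisj: "\<And>i i' x. x \<in> P \<tau> i \<Longrightarrow> x \<in> P \<tau> i' \<Longrightarrow> i = i'" unfolding P_def by simp
  have Mirr: "\<And>i x. (x, x) \<notin> M \<tau> i" unfolding M_def by simp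
  have M22: "\<And>i a b c d. (a, b) \<in> M \<tau> i \<Longrightarrow> (c, d) \<in> M \<tau> i \<Longrightarrow> (a, d) \<in> M \<tau> i \<or> (c, b) \<in> M \<tau> i"
    unfolding M_def by auto
  have OE: "\<And>j a b. (a, b) \<in> Omega_e \<Omega> \<tau> j \<Longrightarrow> a \<in> L \<tau> j \<and> b \<in> L \<tau> j" unfolding Omega_e_def by simp
  have Edisj: "\<And>j j' x. x \<in> L \<tau> j \<Longrightarrow> x \<in> L \<tau> j' \<Longrightarrow> j = j'" unfolding L_def by simp
  have keyj: "\<exists>key :: nat \<Rightarrow> nat. \<forall>x y. (x, y) \<in> Omega_e \<Omega> \<tau> j \<longleftrightarrow> x \<in> L \<tau> j \<and> y \<in> L \<tau> j \<and> key x < key y"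
    if j: "j \<in> {1..m}" for j
  proof (rule key_exists)
    show "strict_total_order_on (Lw \<tau> j) (\<Omega> \<tau> j)" using assms(6,7) j unfolding witness_def by blast
    show "unambiguous \<tau>" by (rule assms(8))
    show "\<forall>x\<in>Lr \<tau> j. ev_data (at \<tau> x) = 0 \<or> (\<exists>y\<in>Lw \<tau> j. ev_data (at \<tau> x) = ev_data (at \<tau> y))"
      using assms(2,3,4,5,7) unfolding causality_def by blast
  qed
  have O22: "\<And>j a b c d. j \<in> {1..m} \<Longrightarrow> (a, b) \<in> Omega_e \<Omega> \<tau> j \<Longrightarrow> (c, d) \<in> Omega_e \<Omega> \<tau> j \<Longrightarrow>
      (a, d) \<in> Omega_e \<Omega> \<tau> j \<or> (c, b) \<in> Omega_e \<Omega> \<tau> j"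
  proof -
    fix j a b c d assume j: "j \<in> {1..m}" and e: "(a, b) \<in> Omega_e \<Omega> \<tau> j" "(c, d) \<in> Omega_e \<Omega> \<tau> j"
    obtain key :: "nat \<Rightarrow> nat" where k: "\<forall>x y. (x, y) \<in> Omega_e \<Omega> \<tau> j \<longleftrightarrow> x \<in> L \<tau> j \<and> y \<in> L \<tau> j \<and> key x < key y"
      using keyj[OF j] by blast
    have "a \<in> L \<tau> j" "b \<in> L \<tau> j" "c \<in> L \<tau> j" "d \<in> L \<tau> j" "key a < key b" "key c < key d"
      using e k by auto
    moreover have "key a < key d \<or> key c < key b" using calculation(5,6) by linarith
    ultimately show "(a, d) \<in> Omega_e \<Omega> \<tau> j \<or> (c, b) \<in> Omega_e \<Omega> \<tau> j" using k by blast
  qed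
  have Oirr: "\<And>j x. j \<in> {1..m} \<Longrightarrow> (x, x) \<notin> Omega_e \<Omega> \<tau> j"
  proof -
    fix j x assume j: "j \<in> {1..m}"
    obtain key :: "nat \<Rightarrow> nat" where k: "\<forall>x y. (x, y) \<in> Omega_e \<Omega> \<tau> j \<longleftrightarrow> x \<in> L \<tau> j \<and> y \<in> L \<tau> j \<and> key x < key y"
      using keyj[OF j] by blast
    then show "(x, x) \<notin> Omega_e \<Omega> \<tau> j" by simp
  qed
  have Mirr': "\<And>i x. i \<in> {1..n} \<Longrightarrow> (x, x) \<notin> M \<tau> i" using Mirr by blast
  have M22': "\<And>i a b c d. i \<in> {1..n} \<Longrightarrow> (a, b) \<in> M \<tau> i \<Longrightarrow> (c, d) \<in> M \<tau> i \<Longrightarrow> (a, d) \<in> M \<tau> i \<or> (c, b) \<in> M \<tau> i"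
    using M22 by blast
  note fpRM = fam_props[of "M \<tau>" "P \<tau>" "{1..n}", OF MD Ddisj Mirr' M22']
  have trM: "trans RM" using fpRM(1) unfolding RM_def .
  have irM: "\<And>x. (x, x) \<notin> RM" using fpRM(2) unfolding RM_def .
  note fpRO = fam_props[of "Omega_e \<Omega> \<tau>" "L \<tau>" "{1..m}", OF OE Edisj Oirr O22]
  have trO: "trans RO" using fpRO(1) unfolding RO_def .
  have irO: "\<And>x. (x, x) \<notin> RO" using fpRO(2) unfolding RO_def .
  obtain x where "(x, x) \<in> (RM \<union> RO)\<^sup>+" using assms(9) G unfolding acyclic_def by auto
  then obtain y where "(y, y) \<in> (RM O RO)\<^sup>+" using cycle_C[OF trM trO irM irO] by blast
  then obtain k0 u0 v0 where V0: "valid RM RO k0 u0 v0" using cyc_to_valid by blast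
  have mn: "\<exists>k u w. valid RM RO k u w \<and> k \<le> card {1..n} \<and> k \<le> card {1..m} \<and>
     inj_on u {1..k} \<and> inj_on w {1..k} \<and> u ` {1..k} \<inter> w ` {1..k} = {} \<and>
     (\<forall>x y i i'. 1 \<le> x \<longrightarrow> x < y \<longrightarrow> y \<le> k \<longrightarrow> (u x, w x) \<in> M \<tau> i \<longrightarrow> (u y, w y) \<in> M \<tau> i' \<longrightarrow> i \<noteq> i') \<and>
     (\<forall>x y j j'. 1 \<le> x \<longrightarrow> x < y \<longrightarrow> y \<le> k \<longrightarrow> (w x, u (Suc x)) \<in> Omega_e \<Omega> \<tau> j \<longrightarrow> (w y, u (Suc y)) \<in> Omega_e \<Omega> \<tau> j' \<longrightarrow> j \<noteq> j')"
    apply (rule min_nice[where A=RM and B=RO and I="{1..n}" and J="{1..m}" and Mi="M \<tau>" and Oj="Omega_e \<Omega> \<tau>"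
        and D="P \<tau>" and Ed="L \<tau>"])
               apply (fact RM_def)
              apply (fact RO_def)
             apply simp
            apply simp
           apply (fact MD)
          apply (fact Ddisj)
         apply (fact Mirr)
        apply (fact M22)
       apply (fact OE)
      apply (fact Edisj)
     apply (fact O22)
    apply (fact V0)
    done
  obtain k u w where V: "valid RM RO k u w" and cI: "k \<le> card {1..n}" and cJ: "k \<le> card {1..m}"
    and inju: "inj_on u {1..k}" and injw: "inj_on w {1..k}" and dis: "u ` {1..k} \<inter> w ` {1..k} = {}"
    and P4: "\<forall>x y i i'. 1 \<le> x \<longrightarrow> x < y \<longrightarrow> y \<le> k \<longrightarrow> (u x, w x) \<in> M \<tau> i \<longrightarrow> (u y, w y) \<in> M \<tau> i' \<longrightarrow> i \<noteq> i'"
    and P5: "\<forall>x y j j'. 1 \<le> x \<longrightarrow> x < y \<longrightarrow> y \<le> k \<longrightarrow> (w x, u (Suc x)) \<in> Omega_e \<Omega> \<tau> j \<longrightarrow> (w y, u (Suc y)) \<in> Omega_e \<Omega> \<tau> j' \<longrightarrow> j \<noteq> j'"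
    using mn by blast
  have k1: "1 \<le> k" and eA: "\<And>t. (u t, w t) \<in> RM" and eB: "\<And>t. (w t, u (Suc t)) \<in> RO"
    and pu: "\<And>t. u (t + k) = u t"
    using V unfolding valid_def by auto
  have cs: "u (cyc_succ k x) = u (Suc x)" if "x \<in> {1..k}" for x
  proof (cases "x < k")
    case True then show ?thesis unfolding cyc_succ_def by simp
  next
    case False
    then have "x = k" using that by simp
    then show ?thesis unfolding cyc_succ_def using pu[of 1] by simp
  qed
  have posu: "u t \<in> pos \<tau>" and posw: "w t \<in> pos \<tau>" for t
    using eA[of t] unfolding RM_def M_def P_def by auto
  have "nice_cycle \<Omega> \<tau> n m k u w"
    unfolding nice_cycle_def
  proof (intro conjI)
    show "inj_on u {1..k}" "inj_on w {1..k}" "u ` {1..k} \<inter> w ` {1..k} = {}" by fact+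
    show "u ` {1..k} \<subseteq> pos \<tau>" "w ` {1..k} \<subseteq> pos \<tau>" using posu posw by auto
    show "\<forall>x\<in>{1..k}. (\<exists>i\<in>{1..n}. (u x, w x) \<in> M \<tau> i) \<and> (\<exists>j\<in>{1..m}. (w x, u (cyc_succ k x)) \<in> Omega_e \<Omega> \<tau> j)"
    proof
      fix x assume x: "x \<in> {1..k}"
      show "(\<exists>i\<in>{1..n}. (u x, w x) \<in> M \<tau> i) \<and> (\<exists>j\<in>{1..m}. (w x, u (cyc_succ k x)) \<in> Omega_e \<Omega> \<tau> j)"
        using eA[of x] eB[of x] cs[OF x] unfolding RM_def RO_def by auto
    qed
    show "\<forall>x y i i'. 1 \<le> x \<longrightarrow> x < y \<longrightarrow> y \<le> k \<longrightarrow> (u x, w x) \<in> M \<tau> i \<longrightarrow> (u y, w y) \<in> M \<tau> i' \<longrightarrow> i \<noteq> i'"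
      by (rule P4)
    show "\<forall>x y j j'. 1 \<le> x \<longrightarrow> x < y \<longrightarrow> y \<le> k \<longrightarrow>
        (w x, u (cyc_succ k x)) \<in> Omega_e \<Omega> \<tau> j \<longrightarrow>
        (w y, u (cyc_succ k y)) \<in> Omega_e \<Omega> \<tau> j' \<longrightarrow> j \<noteq> j'"
    proof (intro allI impI)
      fix x y j j' assume h: "1 \<le> x" "x < y" "y \<le> k" "(w x, u (cyc_succ k x)) \<in> Omega_e \<Omega> \<tau> j"
        "(w y, u (cyc_succ k y)) \<in> Omega_e \<Omega> \<tau> j'"
      have "x \<in> {1..k}" "y \<in> {1..k}" using h by auto
      then have "(w x, u (Suc x)) \<in> Omega_e \<Omega> \<tau> j" "(w y, u (Suc y)) \<in> Omega_e \<Omega> \<tau> j'"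
        using h(4,5) cs by auto
      then show "j \<noteq> j'" using P5 h(1-3) by blast
    qed
  qed
  moreover have "k \<le> min n m" using cI cJ by simp
  ultimately show ?thesis using k1 by blast
qed

end
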